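(* For every quasi-symmetric bimodal model $\mathcal{M}$ there exist a symmetric bimodal model $\mathcal{M}^+$ (both relations symmetric) and a surjective $\boxdot$-morphism $h$ from $\mathcal{M}^+$ onto $\mathcal{M}$; consequently, for every state $x$ of $\mathcal{M}^+$ and every $\phi\in\mathcal{L}(\boxdot)$, $\mathcal{M}^+,x\vDash\phi$ iff $\mathcal{M},h(x)\vDash\phi$.
   Context: Fix a nonempty set $\mathbf{P}$ of propositional variables. A bimodal model is $\langle S,R_1,R_2,V\rangle$ with $S$ nonempty, $R_1,R_2\subseteq S\times S$, $V:\mathbf{P}\to\mathcal{P}(S)$. It is quasi-symmetric if for all $i,j\in\{1,2\}$ and all $s,t\in S$ such that $tR_ju$ for some $u\in S$, $sR_it$ implies $tR_is$. $\mathcal{L}(\boxdot):\ \phi::=p\mid\neg\phi\mid(\phi\wedge\phi)\mid\boxdot\phi$, with $\mathcal{M},s\vDash\boxdot\phi$ iff for all $t,u$ with $sR_1t$ and $sR_2u$, ($\mathcal{M},t\vDash\phi\iff\mathcal{M},u\vDash\phi$); atoms and Booleans as usual. A function $f:S\to S'$ is a $\boxdot$-morphism from $\langle S,R_1,R_2,V\rangle$ to $\langle S',R_1',R_2',V'\rangle$ if for all $x\in S$: (Var) $x\in V(p)$ iff $f(x)\in V'(p)$ for all $p$; (Forth) for all $y,z\in S$, if $xR_1y$, $xR_2z$ and $f(y)\neq f(z)$, then $f(x)R_1'f(y)$ and $f(x)R_2'f(z)$; (Back) for all $y',z'\in S'$, if $f(x)R_1'y'$, $f(x)R_2'z'$ and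 $y'\neq z'$, then there are $y,z\in S$ with $xR_1y$, $xR_2z$, $f(y)=y'$, $f(z)=z'$. *)

theory Defs
  imports Main
begin

record ('s, 'p) bimodel =
  St :: "'s set"
  Rel1 :: "('s \<times> 's) set"
  Rel2 :: "('s \<times> 's) set"
  Val :: "'p \<Rightarrow> 's set"

definition wf_model :: "('s, 'p) bimodel \<Rightarrow> bool" where
  "wf_model M \<longleftrightarrow> St M \<noteq> {} \<and> Rel1 M \<subseteq> St M \<times> St M \<and> Rel2 M \<subseteq> St M \<times> St M
     \<and> (\<forall>p. Val M p \<subseteq> St M)"

definition rel :: "('s, 'p) bimodel \<Rightarrow> nat \<Rightarrow> ('s \<times> 's) set" where
  "rel M i = (if i = 1 then Rel1 M else Rel2 M)"

definition quasi_symmetric :: "('s, 'p) bimodel \<Rightarrow> bool" where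
  "quasi_symmetric M \<longleftrightarrow>
     (\<forall>i\<in>{1,2::nat}. \<forall>j\<in>{1,2::nat}. \<forall>s\<in>St M. \<forall>t\<in>St M.
        (\<exists>u\<in>St M. (t, u) \<in> rel M j) \<longrightarrow> (s, t) \<in> rel M i \<longrightarrow> (t, s) \<in> rel M i)"

definition symmetric_model :: "('s, 'p) bimodel \<Rightarrow> bool" where
  "symmetric_model M \<longleftrightarrow> sym (Rel1 M) \<and> sym (Rel2 M)"

datatype 'p fml = Atom 'p | Neg "'p fml" | Conj "'p fml" "'p fml" | Dot "'p fml"

fun sat :: "('s, 'p) bimodel \<Rightarrow> 's \<Rightarrow> 'p fml \<Rightarrow> bool" where
  "sat M s (Atom p) \<longleftrightarrow> s \<in> Val M p"
| "sat M s (Neg \<phi>) \<longleftrightarrow> \<not> sat M s \<phi>"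
| "sat M s (Conj \<phi> \<psi>) \<longleftrightarrow> sat M s \<phi> \<and> sat M s \<psi>"
| "sat M s (Dot \<phi>) \<longleftrightarrow>
     (\<forall>t u. (s, t) \<in> Rel1 M \<longrightarrow> (s, u) \<in> Rel2 M \<longrightarrow> (sat M t \<phi> \<longleftrightarrow> sat M u \<phi>))"

definition dot_morphism :: "('s, 'p) bimodel \<Rightarrow> ('t, 'p) bimodel \<Rightarrow> ('s \<Rightarrow> 't) \<Rightarrow> bool" where
  "dot_morphism M M' f \<longleftrightarrow>
     (\<forall>x\<in>St M. f x \<in> St M') \<and>
     (\<forall>x\<in>St M.
        (\<forall>p. x \<in> Val M p \<longleftrightarrow> f x \<in> Val M' p) \<and>
        (\<forall>y\<in>St M. \<forall>z\<in>St M. (x, y) \<in> Rel1 M \<longrightarrow> (x, z) \<in> Rel2 M \<longrightarrow> f y \<noteq> f z \<longrightarrow>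
            (f x, f y) \<in> Rel1 M' \<and> (f x, f z) \<in> Rel2 M') \<and>
        (\<forall>y'\<in>St M'. \<forall>z'\<in>St M'. (f x, y') \<in> Rel1 M' \<longrightarrow> (f x, z') \<in> Rel2 M' \<longrightarrow> y' \<noteq> z' \<longrightarrow>
            (\<exists>y\<in>St M. \<exists>z\<in>St M. (x, y) \<in> Rel1 M \<and> (x, z) \<in> Rel2 M \<and> f y = y' \<and> f z = z')))"

end

theory Submission
  imports Defs
begin

definition DE :: "('a,'p) bimodel \<Rightarrow> 'a \<Rightarrow> bool" where
  "DE M t \<longleftrightarrow> (\<forall>u. (t,u)\<notin>Rel1 M \<and> (t,u)\<notin>Rel2 M)"

definition EE :: "('a,'p) bimodel \<Rightarrow> nat \<Rightarrow> ((nat\<times>'a) list \<times> (nat\<times>'a) list) set" where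
  "EE M i = {([(0,s)],[(0,t)]) | s t. (s,t)\<in>rel M i \<and> \<not> DE M t}
          \<union> {([(0,s)],[(i,t),(0,s)]) | s t. (s,t)\<in>rel M i \<and> DE M t}"

definition MP :: "('a,'p) bimodel \<Rightarrow> ((nat\<times>'a) list,'p) bimodel" where
  "MP M = \<lparr>St = {[(0,s)] | s. s\<in>St M} \<union> {[(i,t),(0,s)] | i s t. i\<in>{1,2} \<and> (s,t)\<in>rel M i \<and> DE M t},
          Rel1 = EE M 1 \<union> (EE M 1)\<inverse>, Rel2 = EE M 2 \<union> (EE M 2)\<inverse>,
          Val = (\<lambda>p. {x. x \<in> {[(0,s)] | s. s\<in>St M} \<union> {[(i,t),(0,s)] | i s t. i\<in>{1,2} \<and> (s,t)\<in>rel M i \<and> DE M t}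
                     \<and> snd (hd x) \<in> Val M p})\<rparr>"

lemma R12: "Rel1 M = rel M 1" "Rel2 M = rel M 2"
  by (auto simp: rel_def)

lemma relMP: "i \<in> {1,2} \<Longrightarrow> rel (MP M) i = EE M i \<union> (EE M i)\<inverse>"
  by (auto simp: rel_def MP_def)

lemma relM: "i \<in> {1,2::nat} \<Longrightarrow> (s,t) \<in> rel M i \<Longrightarrow> wf_model M \<Longrightarrow> s \<in> St M \<and> t \<in> St M"
  by (auto simp: rel_def wf_model_def)

lemma DE_rel: "DE M t \<Longrightarrow> i \<in> {1,2::nat} \<Longrightarrow> (t,u) \<notin> rel M i"
  by (auto simp: DE_def rel_def)

lemma qs: "wf_model M \<Longrightarrow> quasi_symmetric M \<Longrightarrow> i \<in> {1,2::nat} \<Longrightarrow> (s,t) \<in> rel M i \<Longrightarrow> \<not> DE M t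
   \<Longrightarrow> (t,s) \<in> rel M i"
proof -
  assume w: "wf_model M" and q: "quasi_symmetric M" and i: "i \<in> {1,2::nat}" and st: "(s,t) \<in> rel M i"
    and d: "\<not> DE M t"
  from d obtain u where "(t,u)\<in>Rel1 M \<or> (t,u)\<in>Rel2 M" by (auto simp: DE_def)
  then obtain j where j: "j \<in> {1,2::nat}" and tu: "(t,u) \<in> rel M j"
    by (metis R12 insert_iff)
  have "s \<in> St M" "t \<in> St M" using relM[OF i st w] by auto
  moreover have "u \<in> St M" using relM[OF j tu w] by auto
  ultimately have su: "s \<in> St M" "t \<in> St M" "u \<in> St M" by auto
  have H: "(\<exists>u\<in>St M. (t, u) \<in> rel M j) \<longrightarrow> (s, t) \<in> rel M i \<longrightarrow> (t, s) \<in> rel M i"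
    using bspec[OF bspec[OF bspec[OF bspec[OF q[unfolded quasi_symmetric_def] i] j] su(1)] su(2)] .
  have "\<exists>u\<in>St M. (t, u) \<in> rel M j" using su(3) tu by blast
  thus ?thesis using H st by blast
qed

lemma LA: "wf_model M \<Longrightarrow> quasi_symmetric M \<Longrightarrow> i \<in> {1,2::nat} \<Longrightarrow> ([(0,s)],y) \<in> rel (MP M) i
   \<Longrightarrow> (s, snd (hd y)) \<in> rel M i"
  apply (simp add: relMP EE_def)
  apply (elim disjE exE conjE)
  using qs[of M i] by auto

lemma LB: "i \<in> {1,2::nat} \<Longrightarrow> (s,t) \<in> rel M i \<Longrightarrow> \<exists>y. ([(0,s)],y) \<in> rel (MP M) i \<and> snd (hd y) = t"
proof (cases "DE M t")
  case True
  assume "i \<in> {1,2}" "(s,t) \<in> rel M i"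
  then show ?thesis using True by (intro exI[of _ "[(i,t),(0,s)]"]) (auto simp: relMP EE_def)
next
  case False
  assume "i \<in> {1,2}" "(s,t) \<in> rel M i"
  then show ?thesis using False by (intro exI[of _ "[(0,t)]"]) (auto simp: relMP EE_def)
qed

lemma LC0: assumes w: "wf_model M" and i: "i \<in> {1,2::nat}" and ab: "(a,b) \<in> EE M i"
  shows "a \<in> St (MP M) \<and> b \<in> St (MP M)"
proof -
  from ab obtain s t where st: "(s,t) \<in> rel M i" and
     c: "(a = [(0,s)] \<and> b = [(0,t)]) \<or> (a = [(0,s)] \<and> b = [(i,t),(0,s)] \<and> DE M t)"
    unfolding EE_def by blast
  have S: "s \<in> St M" "t \<in> St M" using relM[OF i st w] by auto
  have A: "[(0,s)] \<in> St (MP M)" "[(0,t)] \<in> St (MP M)" using S by (auto simp: MP_def)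
  have "DE M t \<Longrightarrow> [(i,t),(0,s)] \<in> St (MP M)" using i st unfolding MP_def by auto
  thus ?thesis using c A by blast
qed

lemma LC: "wf_model M \<Longrightarrow> i \<in> {1,2::nat} \<Longrightarrow> (x,y) \<in> rel (MP M) i \<Longrightarrow> x \<in> St (MP M) \<and> y \<in> St (MP M)"
  using LC0[of M i x y] LC0[of M i y x] by (auto simp: relMP)

lemma LD: "i \<in> {1,2::nat} \<Longrightarrow> ([(k,t),(0,s)],y) \<in> rel (MP M) i \<Longrightarrow> i = k"
  by (auto simp: relMP EE_def)

lemma LE: "x \<in> St (MP M) \<Longrightarrow> (\<exists>s. x = [(0,s)] \<and> s \<in> St M) \<or>
   (\<exists>k s t. x = [(k,t),(0,s)] \<and> k \<in> {1,2} \<and> (s,t) \<in> rel M k \<and> DE M t)"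
  by (auto simp: MP_def)


theorem mainTheorem15:
  fixes M :: "('a, 'p) bimodel"
  assumes "wf_model M" and "quasi_symmetric M"
  shows "\<exists>(Mp :: ((nat \<times> 'a) list, 'p) bimodel) h.
           wf_model Mp \<and> symmetric_model Mp \<and> dot_morphism Mp M h \<and> h ` St Mp = St M \<and>
           (\<forall>x\<in>St Mp. \<forall>\<phi>. sat Mp x \<phi> \<longleftrightarrow> sat M (h x) \<phi>)"
proof -
  note w = assms(1) and q = assms(2)
  let ?h = "\<lambda>x::(nat\<times>'a) list. snd (hd x)"
  have ex: "\<And>A B C D E. A \<Longrightarrow> B \<Longrightarrow> C \<Longrightarrow> D \<Longrightarrow> E \<Longrightarrow> A \<and> B \<and> C \<and> D \<and> E" by blast
  show ?thesis
  apply (rule exI[of _ "MP M"], rule exI[of _ ?h], rule ex)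
  proof -
  have i12: "(1::nat) \<in> {1,2}" "(2::nat) \<in> {1,2}" by auto
  have hS: "?h x \<in> St M" if "x \<in> St (MP M)" for x
    using LE[OF that] relM[OF _ _ w] by fastforce
  show "wf_model (MP M)"
  proof -
    obtain s where "s \<in> St M" using w by (auto simp: wf_model_def)
    hence "[(0,s)] \<in> St (MP M)" by (auto simp: MP_def)
    moreover have "Rel1 (MP M) \<subseteq> St (MP M) \<times> St (MP M)" "Rel2 (MP M) \<subseteq> St (MP M) \<times> St (MP M)"
      using LC[OF w i12(1)] LC[OF w i12(2)] unfolding R12 by auto
    moreover have "\<forall>p. Val (MP M) p \<subseteq> St (MP M)" by (auto simp: MP_def)
    ultimately show ?thesis unfolding wf_model_def by blast
  qed
  show "symmetric_model (MP M)" by (auto simp: symmetric_model_def MP_def sym_def)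
  show "?h ` St (MP M) = St M"
  proof
    show "?h ` St (MP M) \<subseteq> St M" using hS by auto
    show "St M \<subseteq> ?h ` St (MP M)"
    proof
      fix s assume "s \<in> St M"
      hence "[(0,s)] \<in> St (MP M)" by (auto simp: MP_def)
      thus "s \<in> ?h ` St (MP M)" by force
    qed
  qed
  have dead: "\<not> ((x,y) \<in> Rel1 (MP M) \<and> (x,z) \<in> Rel2 (MP M))" if "x = [(k,t),(0,s)]" for x y z k t s
    using LD[OF i12(1), of k t s _ M] LD[OF i12(2), of k t s _ M] that unfolding R12 by (metis numeral_eq_one_iff semiring_norm(85))
  have deadT: "DE M t" if "[(k,t),(0,s)] \<in> St (MP M)" for k t s
    using LE[OF that] by auto
  show "dot_morphism (MP M) M ?h"
    unfolding dot_morphism_def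
  proof (intro conjI ballI allI impI)
    fix x assume "x \<in> St (MP M)" thus "?h x \<in> St M" by (rule hS)
  next
    fix x p assume "x \<in> St (MP M)" thus "x \<in> Val (MP M) p \<longleftrightarrow> ?h x \<in> Val M p"
      by (auto simp: MP_def)
  next
    fix x y z assume x: "x \<in> St (MP M)" and xy: "(x,y) \<in> Rel1 (MP M)" and xz: "(x,z) \<in> Rel2 (MP M)"
    from LE[OF x] dead xy xz obtain s where xs: "x = [(0,s)]" by blast
    show "(?h x, ?h y) \<in> Rel1 M" "(?h x, ?h z) \<in> Rel2 M"
      using LA[OF w q i12(1), of s y] LA[OF w q i12(2), of s z] xy xz xs unfolding R12 by auto
  next
    fix x y' z' assume x: "x \<in> St (MP M)" and y': "y' \<in> St M" and z': "z' \<in> St M"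
      and xy: "(?h x, y') \<in> Rel1 M" and xz: "(?h x, z') \<in> Rel2 M"
    from LE[OF x] obtain s where xs: "x = [(0,s)]"
      using DE_rel[OF _ i12(1)] xy unfolding R12 by force
    obtain y where y: "([(0,s)],y) \<in> rel (MP M) 1" "?h y = y'" using LB[OF i12(1)] xy xs unfolding R12 by force
    obtain z where z: "([(0,s)],z) \<in> rel (MP M) 2" "?h z = z'" using LB[OF i12(2)] xz xs unfolding R12 by force
    show "\<exists>y\<in>St (MP M). \<exists>z\<in>St (MP M). (x, y) \<in> Rel1 (MP M) \<and> (x, z) \<in> Rel2 (MP M) \<and> ?h y = y' \<and> ?h z = z'"
      using y z xs LC[OF w i12(1)] LC[OF w i12(2)] unfolding R12 by blast
  qed
  show "\<forall>x\<in>St (MP M). \<forall>\<phi>. sat (MP M) x \<phi> \<longleftrightarrow> sat M (?h x) \<phi>"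
  proof (intro allI ballI)
    fix x \<phi> assume "x \<in> St (MP M)"
    thus "sat (MP M) x \<phi> \<longleftrightarrow> sat M (?h x) \<phi>"
    proof (induction \<phi> arbitrary: x)
      case (Atom p) thus ?case by (auto simp: MP_def)
    next
      case (Neg \<phi>) thus ?case by simp
    next
      case (Conj \<phi> \<psi>) thus ?case by simp
    next
      case (Dot \<phi>)
      note IH = Dot.IH and x = Dot.prems
      show ?case
      proof (cases "\<exists>s. x = [(0,s)]")
        case False
        then obtain k t s where xs: "x = [(k,t),(0,s)]" using LE[OF x] by blast
        have "DE M (?h x)" using deadT x xs by auto
        hence "sat M (?h x) (Dot \<phi>)" by (auto simp: DE_def)
        moreover have "sat (MP M) x (Dot \<phi>)" using dead[OF xs] by auto
        ultimately show ?thesis by simp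
      next
        case True
        then obtain s where xs: "x = [(0,s)]" by blast
        show ?thesis
        proof
          assume L: "sat (MP M) x (Dot \<phi>)"
          show "sat M (?h x) (Dot \<phi>)" unfolding sat.simps
          proof (intro allI impI)
            fix t u assume t: "(?h x, t) \<in> Rel1 M" and u: "(?h x, u) \<in> Rel2 M"
            obtain y where y: "([(0,s)],y) \<in> rel (MP M) 1" "?h y = t" using LB[OF i12(1)] t xs unfolding R12 by force
            obtain z where z: "([(0,s)],z) \<in> rel (MP M) 2" "?h z = u" using LB[OF i12(2)] u xs unfolding R12 by force
            have "y \<in> St (MP M)" "z \<in> St (MP M)" using LC[OF w i12(1)] LC[OF w i12(2)] y z by blast+
            moreover have "(x,y) \<in> Rel1 (MP M)" "(x,z) \<in> Rel2 (MP M)" using y z xs R12 by metis+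
            hence "sat (MP M) y \<phi> \<longleftrightarrow> sat (MP M) z \<phi>" using L by simp
            ultimately show "sat M t \<phi> \<longleftrightarrow> sat M u \<phi>" using IH y z by blast
          qed
        next
          assume R: "sat M (?h x) (Dot \<phi>)"
          show "sat (MP M) x (Dot \<phi>)" unfolding sat.simps
          proof (intro allI impI)
            fix y z assume y: "(x, y) \<in> Rel1 (MP M)" and z: "(x, z) \<in> Rel2 (MP M)"
            have "y \<in> St (MP M)" "z \<in> St (MP M)" using LC[OF w i12(1)] LC[OF w i12(2)] y z unfolding R12 by blast+
            moreover have "(s, ?h y) \<in> Rel1 M" "(s, ?h z) \<in> Rel2 M"
              using LA[OF w q i12(1), of s y] LA[OF w q i12(2), of s z] y z xs unfolding R12 by auto
            hence "sat M (?h y) \<phi> \<longleftrightarrow> sat M (?h z) \<phi>" using R xs by auto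
            ultimately show "sat (MP M) y \<phi> \<longleftrightarrow> sat (MP M) z \<phi>" using IH by blast
          qed
        qed
      qed
    qed
  qed
  qed
qed

end
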